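(* Let $D$ be an oriented knot diagram and let $b$ be a point of $D$ that is not a crossing. Run the robot on $D$ starting at $b$. Then the resulting diagram (the post-robot diagram) is ascending from $b$.
   Context: The robot operates as follows: starting at $b$, it travels along the knot in the direction of the orientation, visiting every crossing twice, and stops when it returns to $b$. Whenever it arrives at a crossing along the over-strand, it leaves the crossing unchanged; whenever it arrives at a crossing along the under-strand, it switches that crossing so that the strand it is travelling on becomes the over-strand, and then passes through. The diagram obtained at the end is the post-robot diagram. An oriented knot diagram is ascending from a point $b$ (not a crossing) if, travelling along the knot from $b$ in the direction of the orientation, every crossing is first met along its under-strand and later along its over-strand; it is descending from $b$ if every crossing is first met along its over-strand. *)

theory Defs
  imports Main
begin

text \<open>
  An oriented knot diagram together with a non-crossing base point b is encoded by its
  Gauss code read from b in the direction of the orientation: the list of the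
  crossing passages met in order.  Each entry (c, ov) records the crossing label c and
  whether the knot passes c along its over-strand (ov = True) or under-strand (ov = False).
\<close>

type_synonym 'c gauss_code = "('c \<times> bool) list"

definition gauss_wf :: "'c gauss_code \<Rightarrow> bool" where
  "gauss_wf g \<longleftrightarrow>
     (\<forall>c \<in> fst ` set g.
        length (filter (\<lambda>p. fst p = c) g) = 2 \<and> (c, True) \<in> set g \<and> (c, False) \<in> set g)"

definition switch_crossing :: "'c \<Rightarrow> 'c gauss_code \<Rightarrow> 'c gauss_code" where
  "switch_crossing c g = map (\<lambda>(x, ov). if x = c then (x, \<not> ov) else (x, ov)) g"

definition robot_step :: "nat \<Rightarrow> 'c gauss_code \<Rightarrow> 'c gauss_code" where
  "robot_step i g = (if snd (g ! i) then g else switch_crossing (fst (g ! i)) g)"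

definition robot :: "'c gauss_code \<Rightarrow> 'c gauss_code" where
  "robot g = fold robot_step [0..<length g] g"

definition ascending :: "'c gauss_code \<Rightarrow> bool" where
  "ascending g \<longleftrightarrow>
     (\<forall>i j. i < j \<and> j < length g \<and> fst (g ! i) = fst (g ! j)
        \<longrightarrow> \<not> snd (g ! i) \<and> snd (g ! j))"

end

theory Submission
  imports Defs
begin

lemma wf_facts:
  assumes "gauss_wf g"
  shows no3: "\<And>i j l. i < length g \<Longrightarrow> j < length g \<Longrightarrow> l < length g \<Longrightarrow> i \<noteq> j \<Longrightarrow> j \<noteq> l \<Longrightarrow> i \<noteq> l
     \<Longrightarrow> fst (g!i) = fst (g!j) \<Longrightarrow> fst (g!j) = fst (g!l) \<Longrightarrow> False"
  and diff: "\<And>i j. i < length g \<Longrightarrow> j < length g \<Longrightarrow> i \<noteq> j \<Longrightarrow> fst (g!i) = fst (g!j)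
     \<Longrightarrow> snd (g!i) \<noteq> snd (g!j)"
proof -
  have C: "card {i. i < length g \<and> fst (g!i) = c} = 2" if "c \<in> fst ` set g" for c
  proof -
    have "length (filter (\<lambda>p. fst p = c) g) = 2" using assms that unfolding gauss_wf_def by blast
    then show ?thesis by (simp add: length_filter_conv_card)
  qed
  show N3: "False" if "i < length g" "j < length g" "l < length g" "i \<noteq> j" "j \<noteq> l" "i \<noteq> l"
     "fst (g!i) = fst (g!j)" "fst (g!j) = fst (g!l)" for i j l
  proof -
    let ?c = "fst (g!i)"
    have "?c \<in> fst ` set g" using that by auto
    hence "card {i. i < length g \<and> fst (g!i) = ?c} = 2" by (rule C)
    moreover have "{i,j,l} \<subseteq> {i. i < length g \<and> fst (g!i) = ?c}" using that by auto
    moreover have "card {i,j,l} = 3" using that by auto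
    moreover have "finite {i. i < length g \<and> fst (g!i) = ?c}" by simp
    ultimately have "card {i,j,l} \<le> card {i. i < length g \<and> fst (g!i) = ?c}"
      by (intro card_mono) 
    then show False using \<open>card {i,j,l} = 3\<close> \<open>card {i. i < length g \<and> fst (g!i) = ?c} = 2\<close> by linarith
  qed
  show "snd (g!i) \<noteq> snd (g!j)" if "i < length g" "j < length g" "i \<noteq> j" "fst (g!i) = fst (g!j)" for i j
  proof -
    let ?c = "fst (g!i)"
    have "?c \<in> fst ` set g" using that by auto
    hence "(?c, True) \<in> set g" "(?c, False) \<in> set g" using assms unfolding gauss_wf_def by auto
    then obtain a b where ab: "a < length g" "g!a = (?c,True)" "b < length g" "g!b = (?c,False)"
      by (metis in_set_conv_nth)
    have "a \<noteq> b" using ab by auto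
    show ?thesis
    proof
      assume eq: "snd (g!i) = snd (g!j)"
      show False
      proof (cases "snd (g!i)")
        case True
        have "\<not> snd (g!b)" using ab(4) by simp
        hence nb: "i \<noteq> b" "j \<noteq> b" using True eq by auto
        have "fst (g!b) = fst (g!i)" using ab(4) by simp
        then have fb: "fst (g!b) = fst (g!i)" .
        show False by (rule N3[of i j b]; use that ab(3) nb fb in simp)
      next
        case False
        have "snd (g!a)" using ab(2) by simp
        hence na: "i \<noteq> a" "j \<noteq> a" using False eq by auto
        have "fst (g!a) = fst (g!i)" using ab(2) by simp
        then have fa: "fst (g!a) = fst (g!i)" .
        show False by (rule N3[of i j a]; use that ab(1) na fa in simp)
      qed
    qed
  qed
qed

lemma step_len: "length (robot_step k h) = length h"
  by (simp add: robot_step_def switch_crossing_def)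

lemma step_nth: "i < length h \<Longrightarrow> robot_step k h ! i =
   (if snd (h!k) then h!i else if fst (h!i) = fst (h!k) then (fst (h!i), \<not> snd (h!i)) else h!i)"
  by (auto simp: robot_step_def switch_crossing_def split: prod.splits)

theorem theorem1p2:
  fixes g :: "'c gauss_code"
  assumes "gauss_wf g"
  shows "ascending (robot g)"
proof -
  let ?n = "length g"
  define Inv where "Inv k h \<longleftrightarrow> length h = ?n \<and> (\<forall>i<?n. fst (h!i) = fst (g!i)) \<and>
     (\<forall>i<?n. \<forall>j<?n. i \<noteq> j \<and> fst (g!i) = fst (g!j) \<longrightarrow> snd (h!i) \<noteq> snd (h!j)) \<and>
     (\<forall>i<k. snd (h!i) \<longleftrightarrow> \<not>(\<exists>j. i < j \<and> j < k \<and> fst (g!j) = fst (g!i)))" for k h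
  note N3 = wf_facts(1)[OF assms] and D = wf_facts(2)[OF assms]
  have I: "Inv k (fold robot_step [0..<k] g)" if "k \<le> ?n" for k
    using that
  proof (induction k)
    case 0
    have "fold robot_step [0..<0] g = g" by simp
    then show ?case unfolding Inv_def using D by (metis less_zeroE)
  next
    case (Suc k)
    let ?h = "fold robot_step [0..<k] g"
    have IH: "Inv k ?h" using Suc by auto
    have kn: "k < ?n" using Suc by auto
    have eq: "fold robot_step [0..<Suc k] g = robot_step k ?h" by simp
    have L: "length ?h = ?n" and F: "\<And>i. i < ?n \<Longrightarrow> fst (?h!i) = fst (g!i)"
      and P: "\<And>i j. i < ?n \<Longrightarrow> j < ?n \<Longrightarrow> i \<noteq> j \<Longrightarrow> fst (g!i) = fst (g!j) \<Longrightarrow> snd (?h!i) \<noteq> snd (?h!j)"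
      and Q: "\<And>i. i < k \<Longrightarrow> snd (?h!i) \<longleftrightarrow> \<not>(\<exists>j. i < j \<and> j < k \<and> fst (g!j) = fst (g!i))"
      using IH unfolding Inv_def by blast+
    let ?h' = "robot_step k ?h"
    have L': "length ?h' = ?n" using L step_len by metis
    have S: "\<And>i. i < ?n \<Longrightarrow> ?h' ! i = (if snd (?h!k) then ?h!i else if fst (g!i) = fst (g!k) then (fst (?h!i), \<not> snd (?h!i)) else ?h!i)"
      using step_nth[of _ ?h k] L F kn by auto
    have F': "\<And>i. i < ?n \<Longrightarrow> fst (?h'!i) = fst (g!i)" using S F by auto
    have P': "\<And>i j. i < ?n \<Longrightarrow> j < ?n \<Longrightarrow> i \<noteq> j \<Longrightarrow> fst (g!i) = fst (g!j) \<Longrightarrow> snd (?h'!i) \<noteq> snd (?h'!j)"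
    proof -
      fix i j assume a: "i < ?n" "j < ?n" "i \<noteq> j" "fst (g!i) = fst (g!j)"
      have d: "snd (?h!i) \<noteq> snd (?h!j)" by (rule P[OF a])
      show "snd (?h'!i) \<noteq> snd (?h'!j)" unfolding S[OF a(1)] S[OF a(2)] using d a(4) by simp
    qed
    have Q': "snd (?h'!i) \<longleftrightarrow> \<not>(\<exists>j. i < j \<and> j < Suc k \<and> fst (g!j) = fst (g!i))" if "i < Suc k" for i
    proof (cases "i = k")
      case True
      then show ?thesis using S[OF kn] by auto
    next
      case False
      hence ik: "i < k" using that by auto
      show ?thesis
      proof (cases "fst (g!i) = fst (g!k)")
        case True
        have no: "\<not>(\<exists>j. i < j \<and> j < k \<and> fst (g!j) = fst (g!i))"
        proof
          assume "\<exists>j. i < j \<and> j < k \<and> fst (g!j) = fst (g!i)"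
          then obtain j where "i < j" "j < k" "fst (g!j) = fst (g!i)" by blast
          then have jj: "i < j" "j < k" "fst (g!j) = fst (g!i)" .
          show False by (rule N3[of i j k]; use True ik kn jj in simp)
        qed
        hence "snd (?h!i)" using Q ik by auto
        hence "\<not> snd (?h!k)" using P[of i k] ik kn True by auto
        then show ?thesis using S[of i] ik kn True \<open>snd (?h!i)\<close> by auto
      next
        case False
        have "(\<exists>j. i < j \<and> j < Suc k \<and> fst (g!j) = fst (g!i)) \<longleftrightarrow> (\<exists>j. i < j \<and> j < k \<and> fst (g!j) = fst (g!i))"
          using False by (metis less_Suc_eq)
        then show ?thesis using S[of i] ik kn False Q[OF ik] by auto
      qed
    qed
    show ?case unfolding eq Inv_def using L' F' P' Q' by blast
  qed
  have R: "Inv ?n (robot g)" using I[of ?n] unfolding robot_def by simp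
  show ?thesis unfolding ascending_def
  proof (intro allI impI)
    fix i j assume a: "i < j \<and> j < length (robot g) \<and> fst (robot g ! i) = fst (robot g ! j)"
    have L: "length (robot g) = ?n" using R unfolding Inv_def by auto
    have Fi: "fst (g!i) = fst (g!j)" using R a L unfolding Inv_def by auto
    have Q: "\<And>i. i < ?n \<Longrightarrow> snd (robot g!i) \<longleftrightarrow> \<not>(\<exists>j. i < j \<and> j < ?n \<and> fst (g!j) = fst (g!i))"
      using R unfolding Inv_def by auto
    have "\<not> snd (robot g ! i)" using Q[of i] a L Fi by auto
    moreover have "snd (robot g ! j)"
    proof -
      have "\<not>(\<exists>l. j < l \<and> l < ?n \<and> fst (g!l) = fst (g!j))"
      proof
        assume "\<exists>l. j < l \<and> l < ?n \<and> fst (g!l) = fst (g!j)"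
        then obtain l where "j < l" "l < ?n" "fst (g!l) = fst (g!j)" by blast
        then have ll: "j < l" "l < ?n" "fst (g!l) = fst (g!j)" .
        show False by (rule N3[of i j l]; use a L Fi ll in simp)
      qed
      then show ?thesis using Q[of j] a L by auto
    qed
    ultimately show "\<not> snd (robot g ! i) \<and> snd (robot g ! j)" by simp
  qed
qed

end
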